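(* Let $M\subseteq\mathbb{R}^n$ be convex, $D\subseteq\mathbb{R}^n$ discrete, and $F=F_{\mathrm{QC}^n,M\cap D}$. Then $\tau_F\ge |M\cap D|-1$.
   Context: $\mathrm{QC}^n$: quasiconvex functions $f$ with convex domain in $\mathbb{R}^n$, i.e. $f(z)\le\max\{f(x),f(y)\}$ for all $x,y\in\mathrm{dom}(f)$ and $z\in(x,y)$. For a class $\mathscr{F}$ and discrete set $D'$, the problem $F=F_{\mathscr{F},D'}$ has instances $\mathrm{dom}(F)=\{f\in\mathscr{F}: D'\subseteq\mathrm{dom}(f)\}$ and asks for a point of $\arg\min_{x\in D'}f(x)$, where $f$ is accessible only through the comparison oracle answering, for $x,y\in\mathrm{dom}(f)$, whether $f(x)\le f(y)$. An algorithm is a binary decision tree whose internal nodes are comparison queries on pairs of points and whose leaves are labelled by points; it solves $F$ if for every $f\in\mathrm{dom}(F)$ all queried points lie in $\mathrm{dom}(f)$ and the reached leaf is labelled by a point of $\arg\min_{D'}f$. $\tau_F$ is the minimum, over all algorithms solving $F$, of the maximal number of queries on a root-to-leaf path (worst-case number of oracle calls). *)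

theory Defs
  imports "HOL-Analysis.Analysis" "HOL-Library.Extended_Nat"
begin

definition discrete_set :: "(real^'n) set \<Rightarrow> bool" where
  "discrete_set D \<longleftrightarrow> (\<forall>x\<in>D. \<exists>e>0. \<forall>y\<in>D. y \<noteq> x \<longrightarrow> e \<le> dist y x)"

definition quasiconvex_on :: "(real^'n) set \<Rightarrow> (real^'n \<Rightarrow> real) \<Rightarrow> bool" where
  "quasiconvex_on C f \<longleftrightarrow> convex C \<and>
     (\<forall>x\<in>C. \<forall>y\<in>C. \<forall>z\<in>open_segment x y. f z \<le> max (f x) (f y))"

text \<open>Comparison-oracle algorithms: binary decision trees. Node x y l r queries
  whether f x \<le> f y, continuing in l if yes and in r otherwise.\<close>
datatype 'a dtree = Leaf 'a | Node 'a 'a "'a dtree" "'a dtree"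

fun depth :: "'a dtree \<Rightarrow> nat" where
  "depth (Leaf p) = 0"
| "depth (Node x y l r) = Suc (max (depth l) (depth r))"

fun queries_in :: "'a set \<Rightarrow> ('a \<Rightarrow> real) \<Rightarrow> 'a dtree \<Rightarrow> bool" where
  "queries_in C f (Leaf p) = True"
| "queries_in C f (Node x y l r) =
     (x \<in> C \<and> y \<in> C \<and> (if f x \<le> f y then queries_in C f l else queries_in C f r))"

fun run :: "('a \<Rightarrow> real) \<Rightarrow> 'a dtree \<Rightarrow> 'a" where
  "run f (Leaf p) = p"
| "run f (Node x y l r) = (if f x \<le> f y then run f l else run f r)"

definition is_argmin_on :: "('a \<Rightarrow> real) \<Rightarrow> 'a set \<Rightarrow> 'a \<Rightarrow> bool" where
  "is_argmin_on f S p \<longleftrightarrow> p \<in> S \<and> (\<forall>y\<in>S. f p \<le> f y)"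

definition solves_QC :: "(real^'n) set \<Rightarrow> (real^'n) dtree \<Rightarrow> bool" where
  "solves_QC D' T \<longleftrightarrow> (\<forall>C f. quasiconvex_on C f \<and> D' \<subseteq> C \<longrightarrow>
      queries_in C f T \<and> is_argmin_on f D' (run f T))"

text \<open>Worst-case oracle complexity tau_F (\<infinity> if no algorithm solves F).\<close>
definition tau_QC :: "(real^'n) set \<Rightarrow> enat" where
  "tau_QC D' = (INF T \<in> {T. solves_QC D' T}. enat (depth T))"

end

theory Submission
  imports Defs
begin

fun lys :: "'a dtree \<Rightarrow> 'a list" where
  "lys (Leaf p) = []"
| "lys (Node x y l r) = y # lys l"

lemma lys_len: "length (lys T) \<le> depth T"
  by (induction T) auto

definition fp :: "'a \<Rightarrow> 'a \<Rightarrow> real" where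
  "fp p = (\<lambda>x. if x = p then -1 else 0)"

lemma run_fp: "p \<notin> set (lys T) \<Longrightarrow> run (fp p) T = run (\<lambda>_. 0) T"
  by (induction T) (auto simp: fp_def)

lemma qc_fp: "quasiconvex_on UNIV (fp (p::real^'n))"
  unfolding quasiconvex_on_def fp_def
proof (intro conjI ballI)
  fix x y z :: "real^'n"
  assume "z \<in> open_segment x y"
  then have "x \<noteq> y" by auto
  then show "(if z = p then -1 else 0) \<le> max (if x = p then -1 else 0) (if y = p then -1 else (0::real))"
    by auto
qed auto

lemma two_bad:
  assumes "solves_QC (S::(real^'n) set) T" "p \<in> S" "q \<in> S" "p \<noteq> q"
    "p \<notin> set (lys T)" "q \<notin> set (lys T)"
  shows False
proof -
  have a: "is_argmin_on (fp p) S (run (fp p) T)" and b: "is_argmin_on (fp q) S (run (fp q) T)"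
    using assms(1) qc_fp unfolding solves_QC_def by blast+
  have "fp p (run (fp p) T) \<le> fp p p" using a assms(2) unfolding is_argmin_on_def by blast
  then have "run (fp p) T = p" by (auto simp: fp_def split: if_splits)
  moreover have "fp q (run (fp q) T) \<le> fp q q" using b assms(3) unfolding is_argmin_on_def by blast
  then have "run (fp q) T = q" by (auto simp: fp_def split: if_splits)
  ultimately show False using run_fp assms by metis
qed

lemma two_of_card:
  assumes "finite A" "card A \<ge> 2" obtains p q where "p \<in> A" "q \<in> A" "p \<noteq> q"
proof -
  from assms obtain p where p: "p \<in> A" by fastforce
  have "card (A - {p}) \<ge> 1" using assms p by auto
  then have "A - {p} \<noteq> {}" by (metis card.empty not_one_le_zero)
  then obtain q where "q \<in> A - {p}" by blast
  with p that show thesis by auto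
qed

lemma two_of_inf:
  assumes "infinite A" obtains p q where "p \<in> A" "q \<in> A" "p \<noteq> q"
proof -
  from assms obtain p where p: "p \<in> A" by fastforce
  have "infinite (A - {p})" using assms by auto
  then have "A - {p} \<noteq> {}" by (metis finite.emptyI)
  then obtain q where "q \<in> A - {p}" by blast
  with p that show thesis by auto
qed

theorem mainTheorem8:
  fixes M D :: "(real^'n) set"
  assumes "convex M" and "discrete_set D"
  shows "tau_QC (M \<inter> D) \<ge> (if finite (M \<inter> D) then enat (card (M \<inter> D) - 1) else \<infinity>)"
proof -
  define S where "S = M \<inter> D"
  have key: "(if finite S then enat (card S - 1) else \<infinity>) \<le> enat (depth T)"
    if sol: "solves_QC S T" for T
  proof (cases "finite S")
    case True
    show ?thesis
    proof (rule ccontr)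
      assume "\<not> ?thesis"
      then have lt: "depth T + 2 \<le> card S" using True by auto
      have "card S - card (set (lys T)) \<le> card (S - set (lys T))"
        by (rule diff_card_le_card_Diff) simp
      moreover have "card (set (lys T)) \<le> depth T"
        using card_length lys_len order_trans by blast
      ultimately have "card (S - set (lys T)) \<ge> 2" using lt by linarith
      then obtain p q where "p \<in> S - set (lys T)" "q \<in> S - set (lys T)" "p \<noteq> q"
        using two_of_card[of "S - set (lys T)"] True by blast
      then show False using two_bad[OF sol] by blast
    qed
  next
    case False
    then have "infinite (S - set (lys T))" by auto
    then obtain p q where "p \<in> S - set (lys T)" "q \<in> S - set (lys T)" "p \<noteq> q"
      using two_of_inf by blast
    then show ?thesis using two_bad[OF sol] by blast
  qed
  show ?thesis unfolding tau_QC_def S_def[symmetric]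
    by (rule INF_greatest) (use key in auto)
qed

end
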